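(* Let $K\in{\rm Alg}(V)$ be a cubic cyclic Galois field extension of $F$ with ${\rm Gal}(K/F)=\langle\tau\rangle$, and let $(f,g)\in{\rm Gl}(V)\times{\rm Gl}(V)$. Then there exists $(f',g')\in{\rm Gl}(V)\times{\rm Gl}(V)$ with $K^{(f,g)}\cong K^{(f',g')}$ such that $f'$ has exactly one of the following forms: (1) $f'={\rm id}+L(y_1)\tau+L(y_2)\tau^2$ with $y_1,y_2\in K^\times$ and $N(y_1)+N(y_2)-T(\tau(y_1)\tau^2(y_2))\ne-1$; (2) $f'={\rm id}+L(y_2)\tau^2$ with $y_2\in K^\times$, $N(y_2)\ne-1$; (3) $f'={\rm id}+L(y_1)\tau$ with $y_1\in K^\times$, $N(y_1)\ne-1$; (4) $f'={\rm id}$; (5) $f'=L(y_1)\tau+L(y_2)\tau^2$ with $y_1,y_2\in K^\times$, $N(y_2)\ne-N(y_1)$; (6) $f'=L(y_2)\tau^2$ with $y_2\in K^\times$; (7) $f'=L(y_1)\tau$ with $y_1\in K^\times$. Moreover, algebras $K^{(f',g')}$ and $K^{(f'',g'')}$ with $f',f''$ of different forms among (1)–(7) are never isomorphic.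
   Context: $F$ is a field, $V$ a $3$-dimensional $F$-vector space, $K\in{\rm Alg}(V)$ an $F$-algebra structure on $V$ which is a field. $N=N_{K/F}$ and $T=T_{K/F}$ are the field norm and trace. $L(x)$ is the map $y\mapsto xy$. For $f,g\in{\rm End}_F(V)$, $K^{(f,g)}$ is $V$ with product $x\cdot y=f(x)g(y)$. (For reference, the map ${\rm id}\cdot L(y_0)+L(y_1)\tau+L(y_2)\tau^2$ has determinant $N(y_0)+N(y_1)+N(y_2)-T(y_0\tau(y_1)\tau^2(y_2))$.) *)

theory Defs
  imports Complex_Main
begin

text \<open>The base field F is a type 'f, the cubic field K (= V with its field structure) is a
type 'k, and iota : F -> K is the structure map making K an F-algebra.\<close>

definition fscale :: "('f::field \<Rightarrow> 'k::field) \<Rightarrow> 'f \<Rightarrow> 'k \<Rightarrow> 'k" where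
  "fscale \<iota> a x = \<iota> a * x"

definition emb_hom :: "('f::field \<Rightarrow> 'k::field) \<Rightarrow> bool" where
  "emb_hom \<iota> \<longleftrightarrow> \<iota> 1 = 1 \<and> (\<forall>a b. \<iota> (a + b) = \<iota> a + \<iota> b) \<and> (\<forall>a b. \<iota> (a * b) = \<iota> a * \<iota> b)"

definition GL :: "('f::field \<Rightarrow> 'k::field) \<Rightarrow> ('k \<Rightarrow> 'k) \<Rightarrow> bool" where
  "GL \<iota> h \<longleftrightarrow> Vector_Spaces.linear (fscale \<iota>) (fscale \<iota>) h \<and> bij h"

definition F_auts :: "('f::field \<Rightarrow> 'k::field) \<Rightarrow> ('k \<Rightarrow> 'k) set" where
  "F_auts \<iota> = {\<sigma>. bij \<sigma> \<and> (\<forall>x y. \<sigma> (x + y) = \<sigma> x + \<sigma> y) \<and> (\<forall>x y. \<sigma> (x * y) = \<sigma> x * \<sigma> y)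
      \<and> \<sigma> 1 = 1 \<and> (\<forall>a. \<sigma> (\<iota> a) = \<iota> a)}"

text \<open>K^(f,g) is V with product x.y = f(x) g(y). An isomorphism K^(f,g) -> K^(f',g')
is an F-linear bijection phi with phi(f x * g y) = f'(phi x) * g'(phi y).\<close>
definition twisted_iso :: "('f::field \<Rightarrow> 'k::field) \<Rightarrow> ('k \<Rightarrow> 'k) \<Rightarrow> ('k \<Rightarrow> 'k)
    \<Rightarrow> ('k \<Rightarrow> 'k) \<Rightarrow> ('k \<Rightarrow> 'k) \<Rightarrow> bool" where
  "twisted_iso \<iota> f g f' g' \<longleftrightarrow>
     (\<exists>\<phi>. GL \<iota> \<phi> \<and> (\<forall>x y. \<phi> (f x * g y) = f' (\<phi> x) * g' (\<phi> y)))"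

definition cnorm :: "('k::field \<Rightarrow> 'k) \<Rightarrow> 'k \<Rightarrow> 'k" where
  "cnorm \<tau> y = y * \<tau> y * \<tau> (\<tau> y)"

definition ctrace :: "('k::field \<Rightarrow> 'k) \<Rightarrow> 'k \<Rightarrow> 'k" where
  "ctrace \<tau> y = y + \<tau> y + \<tau> (\<tau> y)"

definition twist_form :: "('k::field \<Rightarrow> 'k) \<Rightarrow> nat \<Rightarrow> ('k \<Rightarrow> 'k) \<Rightarrow> bool" where
  "twist_form \<tau> k h \<longleftrightarrow>
    (if k = 1 then (\<exists>y1 y2. y1 \<noteq> 0 \<and> y2 \<noteq> 0 \<and>
          cnorm \<tau> y1 + cnorm \<tau> y2 - ctrace \<tau> (\<tau> y1 * \<tau> (\<tau> y2)) \<noteq> -1 \<and>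
          h = (\<lambda>x. x + y1 * \<tau> x + y2 * \<tau> (\<tau> x)))
     else if k = 2 then (\<exists>y2. y2 \<noteq> 0 \<and> cnorm \<tau> y2 \<noteq> -1 \<and> h = (\<lambda>x. x + y2 * \<tau> (\<tau> x)))
     else if k = 3 then (\<exists>y1. y1 \<noteq> 0 \<and> cnorm \<tau> y1 \<noteq> -1 \<and> h = (\<lambda>x. x + y1 * \<tau> x))
     else if k = 4 then h = id
     else if k = 5 then (\<exists>y1 y2. y1 \<noteq> 0 \<and> y2 \<noteq> 0 \<and> cnorm \<tau> y2 \<noteq> - cnorm \<tau> y1 \<and>
          h = (\<lambda>x. y1 * \<tau> x + y2 * \<tau> (\<tau> x)))
     else if k = 6 then (\<exists>y2. y2 \<noteq> 0 \<and> h = (\<lambda>x. y2 * \<tau> (\<tau> x)))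
     else if k = 7 then (\<exists>y1. y1 \<noteq> 0 \<and> h = (\<lambda>x. y1 * \<tau> x))
     else False)"

end

theory Submission
  imports Defs
begin
definition det3 :: "(nat \<Rightarrow> nat \<Rightarrow> 'a::comm_ring_1) \<Rightarrow> 'a" where
 "det3 m = m 0 0 * (m 1 1 * m 2 2 - m 1 2 * m 2 1) - m 0 1 * (m 1 0 * m 2 2 - m 1 2 * m 2 0) + m 0 2 * (m 1 0 * m 2 1 - m 1 1 * m 2 0)"
definition mm :: "(nat \<Rightarrow> nat \<Rightarrow> 'a::comm_ring_1) \<Rightarrow> (nat \<Rightarrow> nat \<Rightarrow> 'a) \<Rightarrow> nat \<Rightarrow> nat \<Rightarrow> 'a" where
 "mm A B i j = (\<Sum>l<3. A i l * B l j)"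
lemma sum3: "(\<Sum>l<3. (F::nat\<Rightarrow>'a::comm_monoid_add) l) = F 0 + F 1 + F 2"
  by (simp add: eval_nat_numeral add.assoc)
lemma all3: "(\<forall>i<3. P i) \<longleftrightarrow> P 0 \<and> P 1 \<and> P (2::nat)"
  by (auto simp: eval_nat_numeral less_Suc_eq)

lemma det3_mult: "det3 (mm A B) = det3 A * det3 B"
  unfolding det3_def mm_def sum3 by (simp add: algebra_simps)

lemma ker3:
  fixes m :: "nat \<Rightarrow> nat \<Rightarrow> 'a::field"
  assumes "det3 m = 0"
  shows "\<exists>v. (v 0 \<noteq> 0 \<or> v 1 \<noteq> 0 \<or> v 2 \<noteq> 0) \<and> (\<forall>i<3. (\<Sum>j<3. m i j * v j) = 0)"
proof -
  define a where "a = m 0 0" define b where "b = m 0 1" define c where "c = m 0 2"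
  define d where "d = m 1 0" define e where "e = m 1 1" define f where "f = m 1 2"
  define g where "g = m 2 0" define h where "h = m 2 1" define k where "k = m 2 2"
  have D: "a*(e*k - f*h) - b*(d*k - f*g) + c*(d*h - e*g) = 0"
    using assms unfolding det3_def a_def b_def c_def d_def e_def f_def g_def h_def k_def .
  have all3: "(\<forall>i<3. P i) \<longleftrightarrow> P 0 \<and> P 1 \<and> P 2" for P :: "nat \<Rightarrow> bool"
    by (auto simp: eval_nat_numeral less_Suc_eq)
  have key: "\<exists>x y z. (x \<noteq> 0 \<or> y \<noteq> 0 \<or> z \<noteq> 0) \<and> a*x+b*y+c*z = 0 \<and> d*x+e*y+f*z=0 \<and> g*x+h*y+k*z=0"
  proof -
    consider "b*f-c*e \<noteq> 0 \<or> c*d-a*f \<noteq> 0 \<or> a*e-b*d \<noteq> 0"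
      | "b*k-c*h \<noteq> 0 \<or> c*g-a*k \<noteq> 0 \<or> a*h-b*g \<noteq> 0"
      | "e*k-f*h \<noteq> 0 \<or> f*g-d*k \<noteq> 0 \<or> d*h-e*g \<noteq> 0"
      | "b*f-c*e = 0" "c*d-a*f = 0" "a*e-b*d = 0" "b*k-c*h = 0" "c*g-a*k = 0" "a*h-b*g = 0"
        "e*k-f*h = 0" "f*g-d*k = 0" "d*h-e*g = 0" by blast
    then show ?thesis
    proof cases
      case 1
      show ?thesis apply (rule exI[of _ "b*f-c*e"], rule exI[of _ "c*d-a*f"], rule exI[of _ "a*e-b*d"])
        using 1 D by (auto simp: algebra_simps)
    next
      case 2
      show ?thesis apply (rule exI[of _ "b*k-c*h"], rule exI[of _ "c*g-a*k"], rule exI[of _ "a*h-b*g"])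
        using 2 D by (auto simp: algebra_simps)
    next
      case 3
      show ?thesis apply (rule exI[of _ "e*k-f*h"], rule exI[of _ "f*g-d*k"], rule exI[of _ "d*h-e*g"])
        using 3 D by (auto simp: algebra_simps)
    next
      case 4
      have E: "x*y - z*w = 0 \<Longrightarrow> y*x = w*z" for x y z w :: 'a by (simp add: algebra_simps)
      show ?thesis
      proof (cases "a \<noteq> 0 \<or> b \<noteq> 0")
        case True then show ?thesis using 4
          by (intro exI[of _ b] exI[of _ "-a"] exI[of _ 0]) (auto simp: algebra_simps)
      next
        case F1: False show ?thesis
        proof (cases "c \<noteq> 0")
          case True then show ?thesis using 4 F1
            by (intro exI[of _ c] exI[of _ 0] exI[of _ "-a"]) (auto simp: algebra_simps)
        next
          case F2: False show ?thesis
          proof (cases "d \<noteq> 0 \<or> e \<noteq> 0")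
            case True then show ?thesis using 4 F1 F2
              by (intro exI[of _ e] exI[of _ "-d"] exI[of _ 0]) (auto simp: algebra_simps)
          next
            case F3: False show ?thesis
            proof (cases "f \<noteq> 0")
              case True then show ?thesis using 4 F1 F2 F3
                by (intro exI[of _ f] exI[of _ 0] exI[of _ "-d"]) (auto simp: algebra_simps)
            next
              case F4: False show ?thesis
              proof (cases "g \<noteq> 0 \<or> h \<noteq> 0")
                case True then show ?thesis using 4 F1 F2 F3 F4
                  by (intro exI[of _ h] exI[of _ "-g"] exI[of _ 0]) (auto simp: algebra_simps)
              next
                case F5: False show ?thesis
                proof (cases "k \<noteq> 0")
                  case True then show ?thesis using 4 F1 F2 F3 F4 F5
                    by (intro exI[of _ k] exI[of _ 0] exI[of _ "-g"]) (auto simp: algebra_simps)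
                next
                  case F6: False show ?thesis using F1 F2 F3 F4 F5 F6
                    by (intro exI[of _ 1] exI[of _ 0] exI[of _ 0]) auto
                qed
              qed
            qed
          qed
        qed
      qed
    qed
  qed
  then obtain x y z where "(x \<noteq> 0 \<or> y \<noteq> 0 \<or> z \<noteq> 0) \<and> a*x+b*y+c*z = 0 \<and> d*x+e*y+f*z=0 \<and> g*x+h*y+k*z=0" by blast
  then show ?thesis
    by (intro exI[of _ "\<lambda>j. if j = 0 then x else if j = 1 then y else z"])
      (auto simp: all3 sum3 a_def b_def c_def d_def e_def f_def g_def h_def k_def)
qed


lemma solve3:
  fixes m :: "nat \<Rightarrow> nat \<Rightarrow> 'a::field"
  assumes d: "det3 m \<noteq> 0"
  shows "\<exists>v. \<forall>i<3. (\<Sum>j<3. m i j * v j) = w i"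
proof -
  define N0 where "N0 = w 0 * (m 1 1 * m 2 2 - m 1 2 * m 2 1) - w 1 * (m 0 1 * m 2 2 - m 0 2 * m 2 1) + w 2 * (m 0 1 * m 1 2 - m 0 2 * m 1 1)"
  define N1 where "N1 = - w 0 * (m 1 0 * m 2 2 - m 1 2 * m 2 0) + w 1 * (m 0 0 * m 2 2 - m 0 2 * m 2 0) - w 2 * (m 0 0 * m 1 2 - m 0 2 * m 1 0)"
  define N2 where "N2 = w 0 * (m 1 0 * m 2 1 - m 1 1 * m 2 0) - w 1 * (m 0 0 * m 2 1 - m 0 1 * m 2 0) + w 2 * (m 0 0 * m 1 1 - m 0 1 * m 1 0)"
  have E: "m i 0 * N0 + m i 1 * N1 + m i 2 * N2 = det3 m * w i" if "i = 0 \<or> i = 1 \<or> i = 2" for i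
    using that by (auto simp: det3_def N0_def N1_def N2_def algebra_simps)
  define v where "v j = (if j = 0 then N0 / det3 m else if j = 1 then N1 / det3 m else N2 / det3 m)" for j :: nat
  have "(\<Sum>j<3. m i j * v j) = w i" if "i = 0 \<or> i = 1 \<or> i = 2" for i
  proof -
    have "(\<Sum>j<3. m i j * v j) = (m i 0 * N0 + m i 1 * N1 + m i 2 * N2) / det3 m"
      unfolding sum3 v_def by (simp add: add_divide_distrib)
    also have "\<dots> = w i" using E[OF that] d by simp
    finally show ?thesis .
  qed
  then show ?thesis unfolding all3 by blast
qed

lemma ded2:
  fixes s r :: "'k::field \<Rightarrow> 'k"
  assumes "\<And>x y. s (x*y) = s x * s y" "\<And>x y. r (x*y) = r x * r y" "s 1 = 1" "r 1 = 1"
    "s x0 \<noteq> r x0" "\<forall>x. a * s x + b * r x = 0"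
  shows "a = 0 \<and> b = 0"
proof -
  have "a + b = 0" using assms(3,4,6) by (metis mult_1_right)
  then have b: "b = -a" by (metis add.commute eq_neg_iff_add_eq_0)
  have "a * (s x0 - r x0) = 0" using assms(6)[rule_format, of x0] b by (simp add: algebra_simps)
  then have "a = 0" using assms(5) by (metis eq_iff_diff_eq_0 mult_eq_0_iff)
  then show ?thesis using b by simp
qed

lemma ded3:
  fixes s r :: "'k::field \<Rightarrow> 'k"
  assumes ms: "\<And>x y. s (x*y) = s x * s y" and mr: "\<And>x y. r (x*y) = r x * r y" and s1: "s 1 = 1" and r1: "r 1 = 1"
    and d1: "s z0 \<noteq> z0" and d2: "r z1 \<noteq> z1" and d3: "s z2 \<noteq> r z2"
    and h: "\<forall>x. c0 * x + c1 * s x + c2 * r x = 0"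
  shows "c0 = 0 \<and> c1 = 0 \<and> c2 = 0"
proof -
  have "\<forall>x. (c1 * (s z0 - z0)) * s x + (c2 * (r z0 - z0)) * r x = 0"
  proof
    fix x
    have A: "c0 * (x * z0) + c1 * s (x*z0) + c2 * r (x*z0) = 0" using h by blast
    have B: "z0 * (c0 * x + c1 * s x + c2 * r x) = 0" using h by simp
    have "(c1 * (s z0 - z0)) * s x + (c2 * (r z0 - z0)) * r x =
      (c0 * (x * z0) + c1 * s (x*z0) + c2 * r (x*z0)) - z0 * (c0 * x + c1 * s x + c2 * r x)"
      unfolding ms mr by (simp add: algebra_simps)
    then show "(c1 * (s z0 - z0)) * s x + (c2 * (r z0 - z0)) * r x = 0" using A B by simp
  qed
  from ded2[OF ms mr s1 r1 d3 this] d1 have c1: "c1 = 0" by simp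
  have "\<forall>x. c0 * id x + c2 * r x = 0" using h c1 by simp
  from ded2[of id r z1 c0 c2, OF _ mr _ r1 _ this] d2 have "c0 = 0 \<and> c2 = 0" by auto
  with c1 show ?thesis by simp
qed

locale cyc =
  fixes \<iota> :: "'f::field \<Rightarrow> 'k::field" and \<tau> :: "'k \<Rightarrow> 'k"
  assumes hom: "emb_hom \<iota>"
    and dim3: "vector_space.dim (fscale \<iota>) (UNIV :: 'k set) = 3"
    and gal: "F_auts \<iota> = {id, \<tau>, \<tau> \<circ> \<tau>}"
    and ord3: "card {id, \<tau>, \<tau> \<circ> \<tau>} = 3"
begin

lemma i1[simp]: "\<iota> 1 = 1" and iadd[simp]: "\<iota> (a+b) = \<iota> a + \<iota> b" and imul[simp]: "\<iota> (a*b) = \<iota> a * \<iota> b"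
  using hom unfolding emb_hom_def by auto
lemma i0[simp]: "\<iota> 0 = 0" using iadd[of 0 0] by (metis add_cancel_right_right add_0)
lemma ineg[simp]: "\<iota> (-a) = - \<iota> a"
proof -
  have "\<iota> a + \<iota> (-a) = 0" using iadd[of a "-a"] by simp
  then show ?thesis by (metis add.commute eq_neg_iff_add_eq_0)
qed
lemma isub[simp]: "\<iota> (a - b) = \<iota> a - \<iota> b" using iadd[of a "-b"] by simp
lemma ieq0[simp]: "\<iota> a = 0 \<longleftrightarrow> a = 0"
proof
  assume z: "\<iota> a = 0" show "a = 0"
  proof (rule ccontr)
    assume "a \<noteq> 0" then have "\<iota> a * \<iota> (inverse a) = 1" by (simp flip: imul)
    then show False using z by simp
  qed
qed simp

lemma VS: "vector_space (fscale \<iota>)"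
  unfolding vector_space_def fscale_def by (simp add: algebra_simps)

lemma lin_iff: "Vector_Spaces.linear (fscale \<iota>) (fscale \<iota>) h \<longleftrightarrow> (\<forall>x y. h (x+y) = h x + h y) \<and> (\<forall>c x. h (\<iota> c * x) = \<iota> c * h x)"
  unfolding Vector_Spaces.linear_iff using VS by (simp add: fscale_def)

lemma F_auts_comp: "s \<in> F_auts \<iota> \<Longrightarrow> r \<in> F_auts \<iota> \<Longrightarrow> s \<circ> r \<in> F_auts \<iota>"
  unfolding F_auts_def by (auto simp: bij_comp)

lemma tau_aut: "\<tau> \<in> F_auts \<iota>" using gal by auto
lemma tau_bij: "bij \<tau>" and tau_add[simp]: "\<tau> (x+y) = \<tau> x + \<tau> y" and tau_mul[simp]: "\<tau> (x*y) = \<tau> x * \<tau> y"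
  and tau1[simp]: "\<tau> 1 = 1" and tau_i[simp]: "\<tau> (\<iota> a) = \<iota> a"
  using tau_aut unfolding F_auts_def by auto
lemma tau0[simp]: "\<tau> 0 = 0" using tau_add[of 0 0] by (metis add_cancel_right_right add_0)
lemma tau_neg[simp]: "\<tau> (-x) = - \<tau> x"
proof -
  have "\<tau> x + \<tau> (-x) = 0" using tau_add[of x "-x"] by simp
  then show ?thesis by (metis add.commute eq_neg_iff_add_eq_0)
qed
lemma tau_sub[simp]: "\<tau> (x - y) = \<tau> x - \<tau> y" using tau_add[of x "-y"] by simp
lemma tau_inj: "\<tau> x = \<tau> y \<Longrightarrow> x = y" using tau_bij by (meson bij_def injD)
lemma tau_eq0[simp]: "\<tau> x = 0 \<longleftrightarrow> x = 0" using tau_inj[of x 0] by auto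

lemma card2: "card {a, b} \<le> 2" by (simp add: card_insert_if)
lemma distinct3: "\<tau> \<noteq> id" "\<tau> \<circ> \<tau> \<noteq> id" "\<tau> \<noteq> \<tau> \<circ> \<tau>"
proof -
  show "\<tau> \<noteq> id"
  proof
    assume "\<tau> = id" then have "{id, \<tau>, \<tau> \<circ> \<tau>} = {id, \<tau>}" by auto
    then show False using ord3 card2[of id \<tau>] by simp
  qed
  show "\<tau> \<circ> \<tau> \<noteq> id"
  proof
    assume "\<tau> \<circ> \<tau> = id" then have "{id, \<tau>, \<tau> \<circ> \<tau>} = {id, \<tau>}" by auto
    then show False using ord3 card2[of id \<tau>] by simp
  qed
  show "\<tau> \<noteq> \<tau> \<circ> \<tau>"
  proof
    assume "\<tau> = \<tau> \<circ> \<tau>" then have "{id, \<tau>, \<tau> \<circ> \<tau>} = {id, \<tau>}" by auto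
    then show False using ord3 card2[of id \<tau>] by simp
  qed
qed

lemma tau3[simp]: "\<tau> (\<tau> (\<tau> x)) = x"
proof -
  have "\<tau> \<circ> \<tau> \<circ> \<tau> \<in> F_auts \<iota>" using F_auts_comp tau_aut by blast
  then consider "\<tau> \<circ> \<tau> \<circ> \<tau> = id" | "\<tau> \<circ> \<tau> \<circ> \<tau> = \<tau>" | "\<tau> \<circ> \<tau> \<circ> \<tau> = \<tau> \<circ> \<tau>" using gal by auto
  then show ?thesis
  proof cases
    case 1 then show ?thesis by (metis comp_apply id_apply)
  next
    case 2
    then have "\<tau> \<circ> \<tau> = id" by (intro ext) (metis comp_apply id_apply tau_inj)
    then show ?thesis using distinct3 by blast
  next
    case 3
    then have "\<tau> = id" by (intro ext) (metis comp_apply id_apply tau_inj)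
    then show ?thesis using distinct3 by blast
  qed
qed

lemma wit: "\<exists>x. \<tau> x \<noteq> x" "\<exists>x. \<tau> (\<tau> x) \<noteq> x" "\<exists>x. \<tau> x \<noteq> \<tau> (\<tau> x)"
  using distinct3 by (auto simp: fun_eq_iff)

lemma ded: "\<forall>x. c0*x + c1*\<tau> x + c2*\<tau>(\<tau> x) = 0 \<Longrightarrow> c0 = 0 \<and> c1 = 0 \<and> c2 = 0"
proof -
  assume h: "\<forall>x. c0*x + c1*\<tau> x + c2*\<tau>(\<tau> x) = 0"
  obtain z0 z1 z2 where "\<tau> z0 \<noteq> z0" "\<tau> (\<tau> z1) \<noteq> z1" "\<tau> z2 \<noteq> \<tau> (\<tau> z2)" using wit by blast
  then show ?thesis using ded3[of \<tau> "\<lambda>x. \<tau> (\<tau> x)" z0 z1 z2 c0 c1 c2] h by simp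
qed

lemma basis3: "\<exists>e::nat\<Rightarrow>'k. (\<forall>x. \<exists>a. x = (\<Sum>j<3. \<iota> (a j) * e j)) \<and> (\<forall>a. (\<Sum>j<3. \<iota> (a j) * e j) = 0 \<longrightarrow> (\<forall>j<3. a j = 0))"
proof -
  interpret V: vector_space "fscale \<iota>" by (rule VS)
  obtain B where B: "V.independent B" "UNIV \<subseteq> V.span B" "card B = 3"
    using V.basis_exists[of UNIV] dim3 by metis
  then obtain b0 b1 b2 where Bd: "B = {b0,b1,b2}" "b0 \<noteq> b1" "b1 \<noteq> b2" "b0 \<noteq> b2"
    by (auto simp: card_3_iff)
  define e where "e j = (if j = 0 then b0 else if j = 1 then b1 else b2)" for j :: nat
  have fB: "finite B" using Bd by simp
  show ?thesis
  proof (intro exI[of _ e] conjI allI impI)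
    fix x
    have "x \<in> V.span B" using B by blast
    then obtain u where "x = (\<Sum>v\<in>B. fscale \<iota> (u v) v)" using V.span_finite[OF fB] by blast
    then have "x = \<iota> (u b0) * b0 + \<iota> (u b1) * b1 + \<iota> (u b2) * b2"
      using Bd by (simp add: fscale_def add.assoc)
    then show "\<exists>a. x = (\<Sum>j<3. \<iota> (a j) * e j)"
      by (intro exI[of _ "\<lambda>j. u (e j)"]) (simp add: sum3 e_def)
  next
    fix a :: "nat \<Rightarrow> 'f" and j :: nat
    assume z: "(\<Sum>j<3. \<iota> (a j) * e j) = 0" and j: "j < 3"
    show "a j = 0"
    proof (rule ccontr)
      assume nz: "a j \<noteq> 0"
      define u where "u v = (if v = b0 then a 0 else if v = b1 then a 1 else a 2)" for v
      have "(\<Sum>v\<in>B. fscale \<iota> (u v) v) = 0"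
        using z Bd by (simp add: sum3 e_def u_def fscale_def add.assoc)
      moreover have "\<exists>v\<in>B. u v \<noteq> 0"
        using nz j Bd unfolding u_def by (auto simp: eval_nat_numeral less_Suc_eq)
      ultimately have "V.dependent B" using V.dependent_finite[OF fB] by blast
      then show False using B by simp
    qed
  qed
qed

definition e where "e = (SOME e::nat\<Rightarrow>'k. (\<forall>x. \<exists>a. x = (\<Sum>j<3. \<iota> (a j) * e j)) \<and> (\<forall>a. (\<Sum>j<3. \<iota> (a j) * e j) = 0 \<longrightarrow> (\<forall>j<3. a j = 0)))"

lemma espan: "\<exists>a. x = (\<Sum>j<3. \<iota> (a j) * e j)" and eindep: "(\<Sum>j<3. \<iota> (a j) * e j) = 0 \<Longrightarrow> j < 3 \<Longrightarrow> a j = 0"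
  using someI_ex[OF basis3] unfolding e_def[symmetric] by blast+

definition tp :: "nat \<Rightarrow> 'k \<Rightarrow> 'k" where
  "tp k x = (if k = 0 then x else if k = 1 then \<tau> x else \<tau> (\<tau> x))"

lemma tp_simps[simp]: "tp 0 x = x" "tp 1 x = \<tau> x" "tp 2 x = \<tau> (\<tau> x)" "tp (Suc 0) x = \<tau> x"
  by (simp_all add: tp_def)

lemma detB: "det3 (\<lambda>k j. tp k (e j)) \<noteq> 0"
proof
  assume "det3 (\<lambda>k j. tp k (e j)) = 0"
  then have "det3 (\<lambda>j k. tp k (e j)) = 0" by (simp add: det3_def algebra_simps)
  from ker3[OF this] obtain v where nz: "v 0 \<noteq> 0 \<or> v 1 \<noteq> 0 \<or> v 2 \<noteq> 0"
    and ker: "\<forall>j<3. (\<Sum>k<3. tp k (e j) * v k) = 0" by blast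
  have k0: "e 0 * v 0 + \<tau> (e 0) * v 1 + \<tau>(\<tau>(e 0)) * v 2 = 0"
   and k1: "e 1 * v 0 + \<tau> (e 1) * v 1 + \<tau>(\<tau>(e 1)) * v 2 = 0"
   and k2: "e 2 * v 0 + \<tau> (e 2) * v 1 + \<tau>(\<tau>(e 2)) * v 2 = 0"
    using ker unfolding all3 sum3 by simp_all
  have "\<forall>x. v 0 * x + v 1 * \<tau> x + v 2 * \<tau> (\<tau> x) = 0"
  proof
    fix x obtain a where x: "x = (\<Sum>j<3. \<iota> (a j) * e j)" using espan by blast
    have "v 0 * x + v 1 * \<tau> x + v 2 * \<tau> (\<tau> x) =
      \<iota> (a 0) * (e 0 * v 0 + \<tau> (e 0) * v 1 + \<tau>(\<tau>(e 0)) * v 2) +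
      \<iota> (a 1) * (e 1 * v 0 + \<tau> (e 1) * v 1 + \<tau>(\<tau>(e 1)) * v 2) +
      \<iota> (a 2) * (e 2 * v 0 + \<tau> (e 2) * v 1 + \<tau>(\<tau>(e 2)) * v 2)"
      unfolding x by (simp add: sum3 algebra_simps)
    also have "\<dots> = 0" using k0 k1 k2 by simp
    finally show "v 0 * x + v 1 * \<tau> x + v 2 * \<tau> (\<tau> x) = 0" .
  qed
  from ded[OF this] nz show False by simp
qed

lemma decomp:
  assumes lin: "Vector_Spaces.linear (fscale \<iota>) (fscale \<iota>) h"
  shows "\<exists>y0 y1 y2. \<forall>x. h x = y0*x + y1*\<tau> x + y2*\<tau>(\<tau> x)"
proof -
  have hadd: "h (x+y) = h x + h y" and hsc: "h (\<iota> c * x) = \<iota> c * h x" for x y c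
    using lin unfolding lin_iff by auto
  have "det3 (\<lambda>j k. tp k (e j)) \<noteq> 0" using detB by (simp add: det3_def algebra_simps)
  from solve3[OF this, of "\<lambda>j. h (e j)"] obtain y where
    y: "\<forall>j<3. (\<Sum>k<3. tp k (e j) * y k) = h (e j)" by blast
  have y0: "h (e 0) = e 0 * y 0 + \<tau> (e 0) * y 1 + \<tau>(\<tau>(e 0)) * y 2"
   and y1: "h (e 1) = e 1 * y 0 + \<tau> (e 1) * y 1 + \<tau>(\<tau>(e 1)) * y 2"
   and y2: "h (e 2) = e 2 * y 0 + \<tau> (e 2) * y 1 + \<tau>(\<tau>(e 2)) * y 2"
    using y unfolding all3 sum3 by simp_all
  show ?thesis
  proof (intro exI allI)
    fix x obtain a where x: "x = (\<Sum>j<3. \<iota> (a j) * e j)" using espan by blast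
    have "h x = \<iota> (a 0) * h (e 0) + \<iota> (a 1) * h (e 1) + \<iota> (a 2) * h (e 2)"
      unfolding x by (simp add: sum3 hadd hsc)
    also have "\<dots> = y 0 * x + y 1 * \<tau> x + y 2 * \<tau> (\<tau> x)"
      unfolding y0 y1 y2 x by (simp add: sum3 algebra_simps)
    finally show "h x = y 0 * x + y 1 * \<tau> x + y 2 * \<tau> (\<tau> x)" .
  qed
qed

end

lemma det3_cong: "(\<And>i j. i < 3 \<Longrightarrow> j < 3 \<Longrightarrow> A i j = B i j) \<Longrightarrow> det3 A = det3 B"
  unfolding det3_def by simp

context cyc begin

definition Mz :: "'k \<Rightarrow> 'k \<Rightarrow> 'k \<Rightarrow> nat \<Rightarrow> nat \<Rightarrow> 'k" where
 "Mz z0 z1 z2 k i = (if k = 0 then (if i = 0 then z0 else if i = 1 then z1 else z2)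
    else if k = 1 then (if i = 0 then \<tau> z2 else if i = 1 then \<tau> z0 else \<tau> z1)
    else (if i = 0 then \<tau> (\<tau> z1) else if i = 1 then \<tau> (\<tau> z2) else \<tau> (\<tau> z0)))"

lemma tp_add: "tp k (x + y) = tp k x + tp k y" by (simp add: tp_def)
lemma tp_mul: "tp k (x * y) = tp k x * tp k y" by (simp add: tp_def)
lemma tp_i: "tp k (\<iota> a) = \<iota> a" by (simp add: tp_def)

lemma inv_det:
  assumes GLh: "GL \<iota> h" and hf: "\<forall>x. h x = z0*x + z1*\<tau> x + z2*\<tau>(\<tau> x)"
  shows "det3 (Mz z0 z1 z2) \<noteq> 0"
proof -
  have lin: "Vector_Spaces.linear (fscale \<iota>) (fscale \<iota>) h" and bh: "bij h" using GLh by (auto simp: GL_def)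
  have hadd: "h (x+y) = h x + h y" and hsc: "h (\<iota> c * x) = \<iota> c * h x" for x y c
    using lin unfolding lin_iff by auto
  have h0: "h 0 = 0" using hsc[of 0 0] by simp
  have "\<forall>j. \<exists>c. h (e j) = (\<Sum>l<3. \<iota> (c l) * e l)" using espan by blast
  then obtain C where C: "\<And>j. h (e j) = (\<Sum>l<3. \<iota> (C j l) * e l)" by metis
  have detC: "det3 (\<lambda>l j. C j l) \<noteq> 0"
  proof
    assume "det3 (\<lambda>l j. C j l) = 0"
    from ker3[OF this] obtain a where nz: "a 0 \<noteq> 0 \<or> a 1 \<noteq> 0 \<or> a 2 \<noteq> 0"
      and ker: "\<forall>l<3. (\<Sum>j<3. C j l * a j) = 0" by blast
    have k: "C 0 0 * a 0 + C 1 0 * a 1 + C 2 0 * a 2 = 0" "C 0 1 * a 0 + C 1 1 * a 1 + C 2 1 * a 2 = 0"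
      "C 0 2 * a 0 + C 1 2 * a 1 + C 2 2 * a 2 = 0"
      using ker unfolding all3 sum3 by simp_all
    have "h (\<Sum>j<3. \<iota> (a j) * e j) = \<iota> (a 0) * h (e 0) + \<iota> (a 1) * h (e 1) + \<iota> (a 2) * h (e 2)"
      unfolding sum3 by (simp add: hadd hsc)
    also have "\<dots> = \<iota> (C 0 0 * a 0 + C 1 0 * a 1 + C 2 0 * a 2) * e 0 + \<iota> (C 0 1 * a 0 + C 1 1 * a 1 + C 2 1 * a 2) * e 1
       + \<iota> (C 0 2 * a 0 + C 1 2 * a 1 + C 2 2 * a 2) * e 2"
      unfolding C sum3 by (simp add: algebra_simps)
    also have "\<dots> = 0" using k by simp
    finally have "h (\<Sum>j<3. \<iota> (a j) * e j) = h 0" using h0 by simp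
    then have "(\<Sum>j<3. \<iota> (a j) * e j) = 0" using bh by (meson bij_def injD)
    then show False using nz eindep[of a] by auto
  qed
  have row: "tp k (h x) = (\<Sum>i<3. Mz z0 z1 z2 k i * tp i x)" if "k < 3" for k x
  proof -
    have "k = 0 \<or> k = 1 \<or> k = 2" using that by auto
    then show ?thesis unfolding sum3 using hf by (auto simp: Mz_def algebra_simps)
  qed
  have ent: "(\<Sum>i<3. Mz z0 z1 z2 k i * tp i (e j)) = (\<Sum>l<3. tp k (e l) * \<iota> (C j l))" if "k < 3" for k j
  proof -
    have "(\<Sum>i<3. Mz z0 z1 z2 k i * tp i (e j)) = tp k (h (e j))" using row[OF that] by simp
    also have "\<dots> = (\<Sum>l<3. tp k (e l) * \<iota> (C j l))"
      unfolding C sum3 by (simp add: tp_add tp_mul tp_i algebra_simps)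
    finally show ?thesis .
  qed
  have "det3 (Mz z0 z1 z2) * det3 (\<lambda>k j. tp k (e j)) = det3 (mm (Mz z0 z1 z2) (\<lambda>k j. tp k (e j)))"
    by (simp add: det3_mult)
  also have "\<dots> = det3 (mm (\<lambda>k j. tp k (e j)) (\<lambda>l j. \<iota> (C j l)))"
    by (rule det3_cong) (simp add: mm_def ent)
  also have "\<dots> = det3 (\<lambda>k j. tp k (e j)) * \<iota> (det3 (\<lambda>l j. C j l))"
  proof -
    have "det3 (\<lambda>l j. \<iota> (C j l)) = \<iota> (det3 (\<lambda>l j. C j l))" by (simp add: det3_def)
    then show ?thesis by (simp only: det3_mult)
  qed
  finally have "det3 (Mz z0 z1 z2) = \<iota> (det3 (\<lambda>l j. C j l))" using detB by (simp add: mult.commute)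
  then show ?thesis using detC by simp
qed

lemma detMz1: "det3 (Mz 1 a b) = 1 + cnorm \<tau> a + cnorm \<tau> b - ctrace \<tau> (\<tau> a * \<tau> (\<tau> b))"
  by (simp add: det3_def Mz_def cnorm_def ctrace_def algebra_simps)

lemma detMz0: "det3 (Mz 0 a b) = cnorm \<tau> a + cnorm \<tau> b"
  by (simp add: det3_def Mz_def cnorm_def ctrace_def algebra_simps)

end

definition pat :: "nat \<Rightarrow> bool \<times> bool \<times> bool" where
 "pat k = (if k=1 then (True,True,True) else if k=2 then (True,False,True) else if k=3 then (True,True,False)
   else if k=4 then (True,False,False) else if k=5 then (False,True,True) else if k=6 then (False,False,True)
   else (False,True,False))"

lemma in17: "(i::nat) \<in> {1..7} \<longleftrightarrow> i=1 \<or> i=2 \<or> i=3 \<or> i=4 \<or> i=5 \<or> i=6 \<or> i=7" by auto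

lemma pat_inj: "i \<in> {1..7} \<Longrightarrow> j \<in> {1..7} \<Longrightarrow> pat i = pat j \<Longrightarrow> i = j"
  unfolding in17 by (elim disjE) (simp_all add: pat_def)

context cyc begin

lemma form_rep:
  assumes "twist_form \<tau> k h" "k \<in> {1..7}"
  shows "\<exists>z0 z1 z2. h = (\<lambda>x. z0*x + z1*\<tau> x + z2*\<tau>(\<tau> x)) \<and> pat k = (z0\<noteq>0, z1\<noteq>0, z2\<noteq>0)"
  using assms unfolding in17
proof (elim disjE)
  assume "k = 1" then obtain y1 y2 where "y1 \<noteq> 0" "y2 \<noteq> 0" "h = (\<lambda>x. x + y1 * \<tau> x + y2 * \<tau> (\<tau> x))"
    using assms(1) by (auto simp: twist_form_def)
  then show ?thesis using \<open>k=1\<close> by (intro exI[of _ 1] exI[of _ y1] exI[of _ y2]) (simp add: pat_def)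
next
  assume "k = 2" then obtain y2 where "y2 \<noteq> 0" "h = (\<lambda>x. x + y2 * \<tau> (\<tau> x))"
    using assms(1) by (auto simp: twist_form_def)
  then show ?thesis using \<open>k=2\<close> by (intro exI[of _ 1] exI[of _ 0] exI[of _ y2]) (simp add: pat_def)
next
  assume "k = 3" then obtain y1 where "y1 \<noteq> 0" "h = (\<lambda>x. x + y1 * \<tau> x)"
    using assms(1) by (auto simp: twist_form_def)
  then show ?thesis using \<open>k=3\<close> by (intro exI[of _ 1] exI[of _ y1] exI[of _ 0]) (simp add: pat_def)
next
  assume "k = 4" then have "h = id"
    using assms(1) by (auto simp: twist_form_def)
  then show ?thesis using \<open>k=4\<close> by (intro exI[of _ 1] exI[of _ 0] exI[of _ 0]) (simp add: pat_def id_def)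
next
  assume "k = 5" then obtain y1 y2 where "y1 \<noteq> 0" "y2 \<noteq> 0" "h = (\<lambda>x. y1 * \<tau> x + y2 * \<tau> (\<tau> x))"
    using assms(1) by (auto simp: twist_form_def)
  then show ?thesis using \<open>k=5\<close> by (intro exI[of _ 0] exI[of _ y1] exI[of _ y2]) (simp add: pat_def)
next
  assume "k = 6" then obtain y2 where "y2 \<noteq> 0" "h = (\<lambda>x. y2 * \<tau> (\<tau> x))"
    using assms(1) by (auto simp: twist_form_def)
  then show ?thesis using \<open>k=6\<close> by (intro exI[of _ 0] exI[of _ 0] exI[of _ y2]) (simp add: pat_def)
next
  assume "k = 7" then obtain y1 where "y1 \<noteq> 0" "h = (\<lambda>x. y1 * \<tau> x)"
    using assms(1) by (auto simp: twist_form_def)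
  then show ?thesis using \<open>k=7\<close> by (intro exI[of _ 0] exI[of _ y1] exI[of _ 0]) (simp add: pat_def)
qed

lemma rep_unique:
  assumes "(\<lambda>x. z0*x + z1*\<tau> x + z2*\<tau>(\<tau> x)) = (\<lambda>x. w0*x + w1*\<tau> x + w2*\<tau>(\<tau> x))"
  shows "z0 = w0 \<and> z1 = w1 \<and> z2 = w2"
proof -
  have "\<forall>x. (z0-w0)*x + (z1-w1)*\<tau> x + (z2-w2)*\<tau>(\<tau> x) = 0"
  proof
    fix x have "z0*x + z1*\<tau> x + z2*\<tau>(\<tau> x) = w0*x + w1*\<tau> x + w2*\<tau>(\<tau> x)" using assms by metis
    then show "(z0-w0)*x + (z1-w1)*\<tau> x + (z2-w2)*\<tau>(\<tau> x) = 0" by (simp add: algebra_simps)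
  qed
  from ded[OF this] show ?thesis by simp
qed

lemma uniq_k:
  assumes "twist_form \<tau> k0 h" "k0 \<in> {1..7}"
  shows "\<exists>!k. k \<in> {1..7} \<and> twist_form \<tau> k h"
proof (rule ex1I[of _ k0])
  show "k0 \<in> {1..7} \<and> twist_form \<tau> k0 h" using assms by simp
next
  fix k assume k: "k \<in> {1..7} \<and> twist_form \<tau> k h"
  obtain z0 z1 z2 where z: "h = (\<lambda>x. z0*x + z1*\<tau> x + z2*\<tau>(\<tau> x))" "pat k = (z0\<noteq>0, z1\<noteq>0, z2\<noteq>0)"
    using form_rep k by blast
  obtain w0 w1 w2 where w: "h = (\<lambda>x. w0*x + w1*\<tau> x + w2*\<tau>(\<tau> x))" "pat k0 = (w0\<noteq>0, w1\<noteq>0, w2\<noteq>0)"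
    using form_rep assms by blast
  from rep_unique[of z0 z1 z2 w0 w1 w2] z(1) w(1) have "z0 = w0 \<and> z1 = w1 \<and> z2 = w2" by simp
  then have "pat k = pat k0" using z w by simp
  then show "k = k0" using pat_inj k assms by blast
qed

lemma part2:
  assumes G: "GL \<iota> f1" "GL \<iota> g1"
    and f1: "f1 = (\<lambda>x. z0*x + z1*\<tau> x + z2*\<tau>(\<tau> x))" and f2: "f2 = (\<lambda>x. w0*x + w1*\<tau> x + w2*\<tau>(\<tau> x))"
    and iso: "twisted_iso \<iota> f1 g1 f2 g2"
  shows "(z0 = 0 \<longleftrightarrow> w0 = 0) \<and> (z1 = 0 \<longleftrightarrow> w1 = 0) \<and> (z2 = 0 \<longleftrightarrow> w2 = 0)"
proof -
  obtain \<phi> where Gp: "GL \<iota> \<phi>" and eq: "\<And>x y. \<phi> (f1 x * g1 y) = f2 (\<phi> x) * g2 (\<phi> y)"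
    using iso unfolding twisted_iso_def by blast
  have bf: "bij f1" "bij g1" "bij \<phi>" using G Gp by (auto simp: GL_def)
  have padd: "\<phi> (x+y) = \<phi> x + \<phi> y" and psc: "\<phi> (\<iota> c * x) = \<iota> c * \<phi> x" for x y c
    using Gp unfolding GL_def lin_iff by auto
  have p0: "\<phi> 0 = 0" using psc[of 0 0] by simp
  have pinj: "\<phi> x = \<phi> y \<Longrightarrow> x = y" for x y using bf(3) by (meson bij_def injD)
  have f1s: "\<exists>x. f1 x = u" for u using bf(1) by (metis bij_def surj_def)
  have g1s: "\<exists>x. g1 x = u" for u using bf(2) by (metis bij_def surj_def)
  have ps: "\<exists>x. \<phi> x = u" for u using bf(3) by (metis bij_def surj_def)
  obtain x1 where x1: "f1 x1 = 1" using f1s by blast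
  obtain y1 where y1: "g1 y1 = 1" using g1s by blast
  define \<alpha> where "\<alpha> = f2 (\<phi> x1)"
  define \<beta> where "\<beta> = g2 (\<phi> y1)"
  have E1: "\<phi> (f1 x) = f2 (\<phi> x) * \<beta>" for x using eq[of x y1] y1 \<beta>_def by simp
  have E2: "\<phi> (g1 y) = \<alpha> * g2 (\<phi> y)" for y using eq[of x1 y] x1 \<alpha>_def by simp
  have p1: "\<phi> 1 \<noteq> 0" using pinj[of 1 0] p0 by auto
  have bnz: "\<beta> \<noteq> 0" using E1[of x1] x1 p1 by auto
  have anz: "\<alpha> \<noteq> 0" using E2[of y1] y1 p1 by auto
  have mult: "\<phi> (u*v) * (\<alpha>*\<beta>) = \<phi> u * \<phi> v" for u v
  proof -
    obtain x where x: "f1 x = u" using f1s by blast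
    obtain y where y: "g1 y = v" using g1s by blast
    show ?thesis using eq[of x y] E1[of x] E2[of y] x y by (simp add: algebra_simps)
  qed
  define c where "c = \<phi> 1"
  have cnz: "c \<noteq> 0" using p1 c_def by simp
  have cab: "c = \<alpha>*\<beta>" using mult[of 1 1] cnz unfolding c_def by (simp add: mult.commute)
  define \<psi> where "\<psi> u = \<phi> u / c" for u
  have psimul: "\<psi> (x*y) = \<psi> x * \<psi> y" for x y
  proof -
    have "\<phi> (x*y) = \<phi> x * \<phi> y / c" using mult[of x y] cab cnz by (simp add: field_simps)
    then show ?thesis unfolding \<psi>_def by (simp add: field_simps)
  qed
  have psiadd: "\<psi> (x+y) = \<psi> x + \<psi> y" for x y unfolding \<psi>_def padd by (simp add: add_divide_distrib)
  have psiinj: "\<psi> x = \<psi> y \<Longrightarrow> x = y" for x y unfolding \<psi>_def using cnz pinj by simp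
  have psisurj: "\<exists>x. \<psi> x = u" for u
  proof -
    obtain x where "\<phi> x = u * c" using ps by blast
    then show ?thesis unfolding \<psi>_def using cnz by (intro exI[of _ x]) simp
  qed
  have psi1: "\<psi> 1 = 1" unfolding \<psi>_def c_def using p1 by simp
  have psii: "\<psi> (\<iota> a) = \<iota> a" for a
    unfolding \<psi>_def c_def using psc[of a 1] p1 by simp
  have "\<psi> \<in> F_auts \<iota>"
    unfolding F_auts_def using psiadd psimul psi1 psii psiinj psisurj
    by (auto simp: bij_def inj_def surj_def) (metis)
  then have "\<psi> = id \<or> \<psi> = \<tau> \<or> \<psi> = \<tau> \<circ> \<tau>" using gal by auto
  then have comm: "\<psi> (\<tau> x) = \<tau> (\<psi> x)" for x by auto
  have psi0: "\<psi> 0 = 0" unfolding \<psi>_def p0 by simp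
  have key: "\<forall>u. (w0*c - (c/\<beta>)*\<psi> z0)*u + (w1*\<tau> c - (c/\<beta>)*\<psi> z1)*\<tau> u + (w2*\<tau>(\<tau> c) - (c/\<beta>)*\<psi> z2)*\<tau>(\<tau> u) = 0"
  proof
    fix u obtain x where u: "u = \<psi> x" using psisurj by metis
    have px: "\<phi> x = c * \<psi> x" unfolding \<psi>_def using cnz by simp
    have "f2 (\<phi> x) = \<phi> (f1 x) / \<beta>" using E1[of x] bnz by simp
    also have "\<phi> (f1 x) = c * \<psi> (f1 x)" unfolding \<psi>_def using cnz by simp
    also have "\<psi> (f1 x) = \<psi> z0 * u + \<psi> z1 * \<tau> u + \<psi> z2 * \<tau> (\<tau> u)"
      unfolding f1 u by (simp add: psiadd psimul comm)
    finally have "w0 * (c * u) + w1 * \<tau> (c * u) + w2 * \<tau> (\<tau> (c * u)) = c * (\<psi> z0 * u + \<psi> z1 * \<tau> u + \<psi> z2 * \<tau> (\<tau> u)) / \<beta>"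
      unfolding f2 px u by simp
    then have F: "\<beta> * (w0 * (c * u) + w1 * (\<tau> c * \<tau> u) + w2 * (\<tau> (\<tau> c) * \<tau> (\<tau> u))) - c * (\<psi> z0 * u + \<psi> z1 * \<tau> u + \<psi> z2 * \<tau> (\<tau> u)) = 0"
      using bnz by (simp add: field_simps)
    have "(w0*c - (c/\<beta>)*\<psi> z0)*u + (w1*\<tau> c - (c/\<beta>)*\<psi> z1)*\<tau> u + (w2*\<tau>(\<tau> c) - (c/\<beta>)*\<psi> z2)*\<tau>(\<tau> u)
      = (\<beta> * (w0 * (c * u) + w1 * (\<tau> c * \<tau> u) + w2 * (\<tau> (\<tau> c) * \<tau> (\<tau> u))) - c * (\<psi> z0 * u + \<psi> z1 * \<tau> u + \<psi> z2 * \<tau> (\<tau> u))) / \<beta>"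
      using bnz by (simp add: field_simps)
    then show "(w0*c - (c/\<beta>)*\<psi> z0)*u + (w1*\<tau> c - (c/\<beta>)*\<psi> z1)*\<tau> u + (w2*\<tau>(\<tau> c) - (c/\<beta>)*\<psi> z2)*\<tau>(\<tau> u) = 0"
      using F by simp
  qed
  from ded[OF key] have
    r0: "w0*c = (c/\<beta>)*\<psi> z0" and r1: "w1*\<tau> c = (c/\<beta>)*\<psi> z1" and r2: "w2*\<tau>(\<tau> c) = (c/\<beta>)*\<psi> z2"
    by simp_all
  have pz: "\<psi> z = 0 \<longleftrightarrow> z = 0" for z using psiinj[of z 0] psi0 by auto
  have A: "c/\<beta> \<noteq> 0" using cnz bnz by simp
  have c1: "\<tau> c \<noteq> 0" and c2: "\<tau> (\<tau> c) \<noteq> 0" using cnz by simp_all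
  have "w0 = 0 \<longleftrightarrow> z0 = 0"
  proof -
    have "w0 = 0 \<longleftrightarrow> w0*c = 0" using cnz by simp
    also have "\<dots> \<longleftrightarrow> \<psi> z0 = 0" unfolding r0 using A by simp
    finally show ?thesis using pz by simp
  qed
  moreover have "w1 = 0 \<longleftrightarrow> z1 = 0"
  proof -
    have "w1 = 0 \<longleftrightarrow> w1*\<tau> c = 0" using c1 by simp
    also have "\<dots> \<longleftrightarrow> \<psi> z1 = 0" unfolding r1 using A by simp
    finally show ?thesis using pz by simp
  qed
  moreover have "w2 = 0 \<longleftrightarrow> z2 = 0"
  proof -
    have "w2 = 0 \<longleftrightarrow> w2*\<tau> (\<tau> c) = 0" using c2 by simp
    also have "\<dots> \<longleftrightarrow> \<psi> z2 = 0" unfolding r2 using A by simp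
    finally show ?thesis using pz by simp
  qed
  ultimately show ?thesis by simp
qed

lemma GL_scale: assumes "GL \<iota> h" "c \<noteq> 0" shows "GL \<iota> (\<lambda>x. c * h x)"
proof -
  have hadd: "h (x+y) = h x + h y" and hsc: "h (\<iota> a * x) = \<iota> a * h x" and b: "bij h" for x y a
    using assms unfolding GL_def lin_iff by auto
  have inj: "inj (\<lambda>x. c * h x)"
    by (rule injI) (use b assms(2) in \<open>auto simp: bij_def inj_def\<close>)
  have surj: "surj (\<lambda>x. c * h x)"
  proof (rule surjI)
    fix y show "c * h (inv h (y / c)) = y" using b assms(2) by (simp add: bij_is_surj surj_f_inv_f)
  qed
  show ?thesis unfolding GL_def lin_iff using inj surj
    by (simp add: hadd hsc distrib_left mult.left_commute bij_def)
qed

lemma GL_id: "GL \<iota> id" unfolding GL_def lin_iff by simp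

lemma part1: assumes Gf: "GL \<iota> f" and Gg: "GL \<iota> g"
  shows "\<exists>f' g'. GL \<iota> f' \<and> GL \<iota> g' \<and> twisted_iso \<iota> f g f' g' \<and> (\<exists>!k. k \<in> {1..7} \<and> twist_form \<tau> k f')"
proof -
  obtain y0 y1 y2 where fy: "\<forall>x. f x = y0*x + y1*\<tau> x + y2*\<tau>(\<tau> x)"
    using decomp Gf unfolding GL_def by blast
  show ?thesis
  proof (cases "y0 = 0")
    case False
    define a where "a = y1/y0"
    define b where "b = y2/y0"
    define f' where "f' = (\<lambda>x. x + a*\<tau> x + b*\<tau>(\<tau> x))"
    have f'eq: "f' = (\<lambda>x. inverse y0 * f x)"
      using False by (auto simp: f'_def fy a_def b_def field_simps)
    have G1: "GL \<iota> f'" using GL_scale[OF Gf, of "inverse y0"] f'eq False by simp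
    have G2: "GL \<iota> (\<lambda>x. y0 * g x)" using GL_scale[OF Gg] False by simp
    have iso: "twisted_iso \<iota> f g f' (\<lambda>x. y0 * g x)"
      unfolding twisted_iso_def using False by (intro exI[of _ id]) (simp add: GL_id f'eq)
    have det: "det3 (Mz 1 a b) \<noteq> 0" using inv_det[OF G1, of 1 a b] f'_def by simp
    have "\<exists>k0\<in>{1..7}. twist_form \<tau> k0 f'"
    proof (cases "a = 0"; cases "b = 0")
      assume "a = 0" "b = 0"
      then show ?thesis by (intro bexI[of _ 4]) (auto simp: twist_form_def f'_def)
    next
      assume ab: "a = 0" "b \<noteq> 0"
      have "cnorm \<tau> b \<noteq> -1"
      proof
        assume "cnorm \<tau> b = -1"
        then have "det3 (Mz 1 a b) = 0" using ab by (simp add: detMz1 cnorm_def ctrace_def)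
        then show False using det by simp
      qed
      then show ?thesis using ab by (intro bexI[of _ 2]) (auto simp: twist_form_def f'_def)
    next
      assume ab: "a \<noteq> 0" "b = 0"
      have "cnorm \<tau> a \<noteq> -1"
      proof
        assume "cnorm \<tau> a = -1"
        then have "det3 (Mz 1 a b) = 0" using ab by (simp add: detMz1 cnorm_def ctrace_def)
        then show False using det by simp
      qed
      then show ?thesis using ab by (intro bexI[of _ 3]) (auto simp: twist_form_def f'_def)
    next
      assume ab: "a \<noteq> 0" "b \<noteq> 0"
      have "cnorm \<tau> a + cnorm \<tau> b - ctrace \<tau> (\<tau> a * \<tau> (\<tau> b)) \<noteq> -1"
      proof
        assume h: "cnorm \<tau> a + cnorm \<tau> b - ctrace \<tau> (\<tau> a * \<tau> (\<tau> b)) = -1"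
        have "det3 (Mz 1 a b) = 1 + (cnorm \<tau> a + cnorm \<tau> b - ctrace \<tau> (\<tau> a * \<tau> (\<tau> b)))"
          unfolding detMz1 by (simp add: algebra_simps)
        then have "det3 (Mz 1 a b) = 0" using h by simp
        then show False using det by simp
      qed
      then show ?thesis using ab by (intro bexI[of _ 1]) (auto simp: twist_form_def f'_def)
    qed
    then have "\<exists>!k. k \<in> {1..7} \<and> twist_form \<tau> k f'" using uniq_k by blast
    then show ?thesis using G1 G2 iso by blast
  next
    case True
    have iso: "twisted_iso \<iota> f g f g"
      unfolding twisted_iso_def by (intro exI[of _ id]) (simp add: GL_id)
    have fe: "f = (\<lambda>x. y1*\<tau> x + y2*\<tau>(\<tau> x))" using fy True by auto
    have det: "det3 (Mz 0 y1 y2) \<noteq> 0" using inv_det[OF Gf, of 0 y1 y2] fy True by simp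
    have "\<exists>k0\<in>{1..7}. twist_form \<tau> k0 f"
    proof (cases "y1 = 0"; cases "y2 = 0")
      assume "y1 = 0" "y2 = 0"
      then have "f 1 = f 0" using fe by simp
      then have False using Gf unfolding GL_def by (metis bij_def injD one_neq_zero)
      then show ?thesis ..
    next
      assume ab: "y1 = 0" "y2 \<noteq> 0"
      then show ?thesis using fe by (intro bexI[of _ 6]) (auto simp: twist_form_def)
    next
      assume ab: "y1 \<noteq> 0" "y2 = 0"
      then show ?thesis using fe by (intro bexI[of _ 7]) (auto simp: twist_form_def)
    next
      assume ab: "y1 \<noteq> 0" "y2 \<noteq> 0"
      have "cnorm \<tau> y2 \<noteq> - cnorm \<tau> y1"
      proof
        assume "cnorm \<tau> y2 = - cnorm \<tau> y1"
        then have "det3 (Mz 0 y1 y2) = 0" by (simp add: detMz0)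
        then show False using det by simp
      qed
      then show ?thesis using ab fe by (intro bexI[of _ 5]) (auto simp: twist_form_def)
    qed
    then have "\<exists>!k. k \<in> {1..7} \<and> twist_form \<tau> k f" using uniq_k by blast
    then show ?thesis using Gf Gg iso by blast
  qed
qed

end

theorem mainTheorem14:
  fixes \<iota> :: "'f::field \<Rightarrow> 'k::field" and \<tau> f g :: "'k \<Rightarrow> 'k"
  assumes hom: "emb_hom \<iota>"
    and dim3: "vector_space.dim (fscale \<iota>) (UNIV :: 'k set) = 3"
    and gal: "F_auts \<iota> = {id, \<tau>, \<tau> \<circ> \<tau>}"
    and ord3: "card {id, \<tau>, \<tau> \<circ> \<tau>} = 3"
    and f: "GL \<iota> f" and g: "GL \<iota> g"
  shows "(\<exists>f' g'. GL \<iota> f' \<and> GL \<iota> g' \<and> twisted_iso \<iota> f g f' g' \<and>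
            (\<exists>!k. k \<in> {1..7} \<and> twist_form \<tau> k f'))
       \<and> (\<forall>i j f' g' f'' g''. i \<in> {1..7} \<and> j \<in> {1..7} \<and> i \<noteq> j \<and>
            GL \<iota> f' \<and> GL \<iota> g' \<and> GL \<iota> f'' \<and> GL \<iota> g'' \<and>
            twist_form \<tau> i f' \<and> twist_form \<tau> j f'' \<longrightarrow> \<not> twisted_iso \<iota> f' g' f'' g'')"
proof -
  interpret cyc \<iota> \<tau> using hom dim3 gal ord3 by (unfold_locales)
  show ?thesis
  proof (intro conjI allI impI)
    show "\<exists>f' g'. GL \<iota> f' \<and> GL \<iota> g' \<and> twisted_iso \<iota> f g f' g' \<and> (\<exists>!k. k \<in> {1..7} \<and> twist_form \<tau> k f')"
      using part1[OF f g] .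
  next
    fix i j f' g' f'' g''
    assume H: "i \<in> {1..7} \<and> j \<in> {1..7} \<and> i \<noteq> j \<and>
            GL \<iota> f' \<and> GL \<iota> g' \<and> GL \<iota> f'' \<and> GL \<iota> g'' \<and>
            twist_form \<tau> i f' \<and> twist_form \<tau> j f''"
    show "\<not> twisted_iso \<iota> f' g' f'' g''"
    proof
      assume iso: "twisted_iso \<iota> f' g' f'' g''"
      obtain z0 z1 z2 where z: "f' = (\<lambda>x. z0*x + z1*\<tau> x + z2*\<tau>(\<tau> x))" "pat i = (z0\<noteq>0, z1\<noteq>0, z2\<noteq>0)"
        using form_rep H by blast
      obtain w0 w1 w2 where w: "f'' = (\<lambda>x. w0*x + w1*\<tau> x + w2*\<tau>(\<tau> x))" "pat j = (w0\<noteq>0, w1\<noteq>0, w2\<noteq>0)"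
        using form_rep H by blast
      have "(z0 = 0 \<longleftrightarrow> w0 = 0) \<and> (z1 = 0 \<longleftrightarrow> w1 = 0) \<and> (z2 = 0 \<longleftrightarrow> w2 = 0)"
        using part2[of f' g' z0 z1 z2 f'' w0 w1 w2 g''] H z w iso by blast
      then have "pat i = pat j" using z w by simp
      then show False using pat_inj H by blast
    qed
  qed
qed

end
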